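(* For every realization of $X$ and every $\alpha\in(\underline{h},\infty)$, $L_\alpha=\widetilde L_\alpha\cup\Theta$.
   Context: Let $\mathbb{T}=\mathbb{R}/\mathbb{Z}$ with canonical surjection $\phi:\mathbb{R}\to\mathbb{T}$ and quotient distance $d$. Let $\mathcal{U}=\{\varnothing\}\cup\bigcup_{j\ge1}\{0,1\}^j$ be the set of finite words over $\{0,1\}$; for $u=u_1\dots u_j$ write $|u|=j$ ($|\varnothing|=0$), $\pi(u)=u_1\dots u_{j-1}$ for $j\ge1$, $\mathcal{U}^*=\mathcal{U}\setminus\{\varnothing\}$, and $u\mathcal{U}$ for the words $uw$, $w\in\mathcal{U}$. Put $x_u=\phi(\sum_{j=1}^{|u|}u_j2^{-j})$. Let $X=(X_u)_{u\in\mathcal{U}}$ be a $\{0,1\}$-valued family and $\underline{h}>0$. $S=\{u\in\mathcal{U}:X_u=1\}$; $\widetilde S=\{u\in\mathcal{U}^*:X_u=1,X_{\pi(u)}=0\}$; for $\alpha>\underline{h}$, $L_\alpha=\{x\in\mathbb{T}:d(x,x_u)<2^{-\underline{h}|u|/\alpha}\text{ for infinitely many }u\in S\}$ and $\widetilde L_\alpha$ is defined likewise with $\widetilde S$ in place of $S$. For $u\in\mathcal{U}$, $\tau_u=\{v\in u\mathcal{U}:X_{v_1\dots v_j}=1\text{ for all }j\in\{|u|,\dots,|v|\}\}$ and $\partial\tau_u=\{\zeta\in\{0,1\}^{\mathbb{N}}:\zeta_1\dots\zeta_j\in\tau_u\text{ for all }j\ge|u|\}$; $\dot x_\zeta=\sum_{j\ge1}\zeta_j2^{-j}$;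 $\Theta=\phi\big(\{\dot x_\zeta:u\in\mathcal{U},\zeta\in\partial\tau_u\}\big)$. *)

theory Defs
  imports "HOL-Analysis.Analysis"
begin

(* The torus T = R/Z is represented by the fundamental domain [0,1);
   the canonical surjection phi is frac. *)
definition torus :: "real set" where
  "torus = {0..<1}"

definition phi :: "real \<Rightarrow> real" where
  "phi x = frac x"

definition tdist :: "real \<Rightarrow> real \<Rightarrow> real" where
  "tdist x y = \<bar>(x - y) - of_int (round (x - y))\<bar>"

(* finite words over {0,1}: bool lists, True = 1; u ! (j-1) is the letter u_j *)
type_synonym word = "bool list"

definition parent :: "word \<Rightarrow> word" where
  "parent u = butlast u"

definition xw :: "word \<Rightarrow> real" where
  "xw u = phi (\<Sum>j<length u. of_bool (u ! j) * (1/2) ^ (j + 1))"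

definition Sset :: "(word \<Rightarrow> bool) \<Rightarrow> word set" where
  "Sset X = {u. X u}"

definition Stilde :: "(word \<Rightarrow> bool) \<Rightarrow> word set" where
  "Stilde X = {u. u \<noteq> [] \<and> X u \<and> \<not> X (parent u)}"

definition Lset :: "word set \<Rightarrow> real \<Rightarrow> real \<Rightarrow> real set" where
  "Lset A h \<alpha> = {x \<in> torus.
      infinite {u \<in> A. tdist x (xw u) < 2 powr (- (h * real (length u) / \<alpha>))}}"

definition L_alpha :: "(word \<Rightarrow> bool) \<Rightarrow> real \<Rightarrow> real \<Rightarrow> real set" where
  "L_alpha X h \<alpha> = Lset (Sset X) h \<alpha>"

definition Ltilde_alpha :: "(word \<Rightarrow> bool) \<Rightarrow> real \<Rightarrow> real \<Rightarrow> real set" where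
  "Ltilde_alpha X h \<alpha> = Lset (Stilde X) h \<alpha>"

definition tau :: "(word \<Rightarrow> bool) \<Rightarrow> word \<Rightarrow> word set" where
  "tau X u = {v. take (length u) v = u \<and> length u \<le> length v \<and> (\<forall>j. length u \<le> j \<and> j \<le> length v \<longrightarrow> X (take j v))}"

(* infinite words zeta : nat => bool, zeta n is the letter zeta_(n+1) *)
definition boundary_tau :: "(word \<Rightarrow> bool) \<Rightarrow> word \<Rightarrow> (nat \<Rightarrow> bool) set" where
  "boundary_tau X u = {\<zeta>. \<forall>j \<ge> length u. map \<zeta> [0..<j] \<in> tau X u}"

definition xdot :: "(nat \<Rightarrow> bool) \<Rightarrow> real" where
  "xdot \<zeta> = (\<Sum>j. of_bool (\<zeta> j) * (1/2) ^ (j + 1))"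

definition Theta :: "(word \<Rightarrow> bool) \<Rightarrow> real set" where
  "Theta X = phi ` {xdot \<zeta> | u \<zeta>. \<zeta> \<in> boundary_tau X u}"

end

theory Submission
  imports Defs
begin

lemma tdist_le: "tdist x y \<le> \<bar>x - y - of_int k\<bar>"
  unfolding tdist_def by (rule round_diff_minimal)

lemma tdist_nonneg: "tdist x y \<ge> 0"
  unfolding tdist_def by simp

lemma tdist_le_abs: "tdist x y \<le> \<bar>x - y\<bar>"
  using tdist_le[of x y 0] by simp

lemma tdist_triangle: "tdist x z \<le> tdist x y + tdist y z"
proof -
  have "tdist x z \<le> \<bar>x - z - of_int (round (x - y) + round (y - z))\<bar>" by (rule tdist_le)
  also have "\<dots> \<le> tdist x y + tdist y z" unfolding tdist_def by simp
  finally show ?thesis .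
qed

lemma tdist_shift2: "tdist x (y + of_int m) = tdist x y"
proof -
  have a: "tdist x (y + of_int m) \<le> tdist x y"
    using tdist_le[of x "y + of_int m" "round (x - y) - m"] unfolding tdist_def by (simp add: algebra_simps)
  have "tdist x y \<le> tdist x (y + of_int m)"
    using tdist_le[of x y "round (x - (y + of_int m)) + m"] unfolding tdist_def by (simp add: algebra_simps)
  with a show ?thesis by simp
qed

lemma tdist_shift1: "tdist (x + of_int m) y = tdist x y"
proof -
  have a: "tdist (x + of_int m) y \<le> tdist x y"
    using tdist_le[of "x + of_int m" y "round (x - y) + m"] unfolding tdist_def by (simp add: algebra_simps)
  have "tdist x y \<le> tdist (x + of_int m) y"
    using tdist_le[of x y "round (x + of_int m - y) - m"] unfolding tdist_def by (simp add: algebra_simps)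
  with a show ?thesis by simp
qed

lemma phi_eq: "phi y = y + of_int (- \<lfloor>y\<rfloor>)"
  unfolding phi_def frac_def by simp

lemma tdist_phi2: "tdist x (phi y) = tdist x y"
  unfolding phi_eq by (rule tdist_shift2)

lemma tdist_phi1: "tdist (phi x) y = tdist x y"
  unfolding phi_eq by (rule tdist_shift1)

lemma phi_torus: "phi y \<in> torus"
  unfolding phi_def torus_def by (simp add: frac_lt_1)

lemma tdist_zero_eq:
  assumes "x \<in> torus" "y \<in> torus" "tdist x y \<le> 0"
  shows "x = y"
proof -
  have "x - y = of_int (round (x - y))" using assms(3) tdist_nonneg[of x y] unfolding tdist_def by simp
  moreover have "\<bar>x - y\<bar> < 1" using assms(1,2) unfolding torus_def by auto
  ultimately have "\<bar>of_int (round (x - y)) :: real\<bar> < 1" by simp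
  hence "round (x - y) = 0" by linarith
  with \<open>x - y = _\<close> show ?thesis by simp
qed

definition wv :: "bool list \<Rightarrow> real" where
  "wv u = (\<Sum>j<length u. of_bool (u ! j) * (1/2) ^ (j + 1))"

lemma xw_wv: "xw u = phi (wv u)"
  unfolding xw_def wv_def ..

lemma geom_sum: "k \<le> n \<Longrightarrow> (\<Sum>j\<in>{k..<n}. (1/2::real) ^ (j + 1)) = (1/2)^k - (1/2)^n"
proof (induction n)
  case 0 then show ?case by simp
next
  case (Suc n)
  show ?case
  proof (cases "k = Suc n")
    case True then show ?thesis by simp
  next
    case False
    then have "k \<le> n" using Suc.prems by simp
    then show ?thesis using Suc.IH by (simp add: sum.atLeastLessThan_Suc)
  qed
qed

lemma wv_take:
  assumes "k \<le> length u"
  shows "0 \<le> wv u - wv (take k u)" "wv u - wv (take k u) \<le> (1/2)^k"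
proof -
  have e: "wv (take k u) = (\<Sum>j<k. of_bool (u ! j) * (1/2::real) ^ (j + 1))"
    unfolding wv_def using assms by (simp add: min_absorb2)
  have "wv u = (\<Sum>j<k. of_bool (u ! j) * (1/2::real) ^ (j + 1)) + (\<Sum>j\<in>{k..<length u}. of_bool (u ! j) * (1/2::real) ^ (j + 1))"
    unfolding wv_def lessThan_atLeast0 using assms by (simp add: sum.atLeastLessThan_concat)
  hence d: "wv u - wv (take k u) = (\<Sum>j\<in>{k..<length u}. of_bool (u ! j) * (1/2::real) ^ (j + 1))"
    using e by simp
  show "0 \<le> wv u - wv (take k u)" unfolding d by (intro sum_nonneg) simp
  have "(\<Sum>j\<in>{k..<length u}. of_bool (u ! j) * (1/2::real) ^ (j + 1)) \<le> (\<Sum>j\<in>{k..<length u}. (1/2::real) ^ (j + 1))"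
    by (intro sum_mono) simp
  also have "\<dots> \<le> (1/2)^k" using geom_sum[OF assms] by simp
  finally show "wv u - wv (take k u) \<le> (1/2)^k" unfolding d .
qed

lemma xdot_bounds:
  shows "0 \<le> xdot z - wv (map z [0..<k])" "xdot z - wv (map z [0..<k]) \<le> (1/2)^k"
proof -
  define f where "f j = of_bool (z j) * (1/2::real) ^ (j + 1)" for j
  have g: "summable (\<lambda>j. (1/2::real) ^ (j + 1))" by simp
  have sf: "summable f" unfolding f_def
    by (rule summable_comparison_test[OF _ g]) auto
  have e: "wv (map z [0..<k]) = (\<Sum>j<k. f j)" unfolding wv_def f_def by simp
  have "xdot z = (\<Sum>j. f (j + k)) + (\<Sum>j<k. f j)"
    unfolding xdot_def f_def[symmetric] using suminf_split_initial_segment[OF sf, of k] by simp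
  hence d: "xdot z - wv (map z [0..<k]) = (\<Sum>j. f (j + k))" using e by simp
  have sk: "summable (\<lambda>j. f (j + k))" using sf by (simp add: summable_iff_shift)
  show "0 \<le> xdot z - wv (map z [0..<k])" unfolding d
    by (rule suminf_nonneg[OF sk]) (simp add: f_def)
  have gk: "summable (\<lambda>j. (1/2::real) ^ (j + k + 1))" using g by (simp add: summable_iff_shift[of "\<lambda>j. (1/2::real) ^ (j + 1)" k])
  have "(\<Sum>j. f (j + k)) \<le> (\<Sum>j. (1/2::real) ^ (j + k + 1))"
    by (rule suminf_le[OF _ sk gk]) (simp add: f_def)
  also have "(\<Sum>j. (1/2::real) ^ (j + k + 1)) = (1/2)^k"
  proof -
    have "(\<lambda>j. (1/2::real) ^ (j + k + 1)) = (\<lambda>j. ((1/2)^(k+1)) * (1/2)^j)" by (simp add: power_add mult.commute)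
    moreover have "(\<Sum>j. ((1/2::real)^(k+1)) * (1/2)^j) = (1/2)^(k+1) * (\<Sum>j. (1/2::real)^j)"
      by (rule suminf_mult) (rule summable_geometric, simp)
    moreover have "(\<Sum>j. (1/2::real)^j) = 2" using suminf_geometric[of "1/2::real"] by simp
    ultimately show ?thesis by simp
  qed
  finally show "xdot z - wv (map z [0..<k]) \<le> (1/2)^k" unfolding d .
qed

lemma half_pow_powr: "(1/2::real)^n = 2 powr (- real n)"
  by (simp add: powr_minus powr_realpow power_one_over inverse_eq_divide)

lemma two_powr_lt1: "a < 0 \<Longrightarrow> 2 powr a < (1::real)"
  using powr_less_mono[of a 0 "2::real"] by simp

lemma R1c: "0 \<le> c \<Longrightarrow> m \<le> n \<Longrightarrow> 2 powr (-(c * real n)) \<le> 2 powr (-(c * real m))"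
  by (intro powr_mono) (auto intro: mult_left_mono)

lemma R2c: "c < 1 \<Longrightarrow> 1 \<le> n \<Longrightarrow> (1/2::real)^n < 2 powr (-(c * real n))"
  unfolding half_pow_powr
proof (intro powr_less_mono)
  assume "c < 1" "1 \<le> n"
  then have "c * real n < 1 * real n" by (intro mult_strict_right_mono) auto
  then show "- real n < - (c * real n)" by simp
qed simp

lemma R4c: "0 < c \<Longrightarrow> (\<lambda>n. 2 powr (-(c * real n))) \<longlonglongrightarrow> 0"
proof -
  assume c: "0 < c"
  have e: "2 powr (-(c * real n)) = (2 powr (-c)) ^ n" for n
    by (subst powr_realpow[symmetric]) (simp_all add: powr_powr)
  have "\<bar>2 powr (-c)\<bar> < (1::real)" using c two_powr_lt1[of "-c"] by simp
  then show ?thesis unfolding e by (intro LIMSEQ_abs_realpow_zero2)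
qed

lemma R3c:
  assumes "0 < c" "c < 1"
  shows "\<exists>N\<ge>1. \<forall>n\<ge>N. 2 powr (-(c * real (n+1))) + (1/2::real)^n \<le> 2 powr (-(c * real n))"
proof -
  define q where "q = (2 powr (-(1-c)) :: real)"
  define \<delta> where "\<delta> = (1 - 2 powr (-c) :: real)"
  have q1: "q < 1" "0 < q" unfolding q_def using assms two_powr_lt1[of "-(1-c)"] by auto
  have d0: "0 < \<delta>" unfolding \<delta>_def using assms two_powr_lt1[of "-c"] by simp
  obtain N0 where N0: "q ^ N0 < \<delta>" using real_arch_pow_inv[OF d0 q1(1)] by blast
  show ?thesis
  proof (intro exI[of _ "N0 + 1"] conjI allI impI)
    fix n assume n: "N0 + 1 \<le> n"
    have "q ^ n \<le> q ^ N0" using q1 n by (intro power_decreasing) auto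
    moreover have qn: "q ^ n = 2 powr (-((1-c) * real n))"
      unfolding q_def by (subst powr_realpow[symmetric]) (simp_all add: powr_powr algebra_simps)
    ultimately have "2 powr (-((1-c) * real n)) \<le> 1 - 2 powr (-c)" using N0 unfolding \<delta>_def by simp
    hence "2 powr (-(c * real n)) * (2 powr (-c) + 2 powr (-((1-c) * real n))) \<le> 2 powr (-(c * real n)) * 1"
      by (intro mult_left_mono) auto
    moreover have "2 powr (-(c * real n)) * (2 powr (-c) + 2 powr (-((1-c) * real n)))
        = 2 powr (-(c * real (n+1))) + (1/2::real)^n"
      unfolding half_pow_powr by (simp add: powr_add[symmetric] algebra_simps)
    ultimately show "2 powr (-(c * real (n+1))) + (1/2::real)^n \<le> 2 powr (-(c * real n))" by simp
  qed simp
qed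

definition ext :: "bool list set \<Rightarrow> bool list \<Rightarrow> bool list set" where
  "ext V w = {u \<in> V. take (length w) u = w}"

fun kW :: "bool list set \<Rightarrow> nat \<Rightarrow> bool list" where
  "kW V 0 = []"
| "kW V (Suc n) = (if infinite (ext V (kW V n @ [False])) then kW V n @ [False] else kW V n @ [True])"

lemma ext_split: "ext V w \<subseteq> {w} \<union> ext V (w @ [False]) \<union> ext V (w @ [True])"
proof
  fix u assume u: "u \<in> ext V w"
  show "u \<in> {w} \<union> ext V (w @ [False]) \<union> ext V (w @ [True])"
  proof (cases "length u \<le> length w")
    case True then show ?thesis using u unfolding ext_def by auto
  next
    case False
    then have "take (Suc (length w)) u = take (length w) u @ [u ! length w]"
      by (simp add: take_Suc_conv_app_nth)
    then have "take (length (w @ [u ! length w])) u = w @ [u ! length w]" using u unfolding ext_def by simp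
    then show ?thesis using u unfolding ext_def by (cases "u ! length w") auto
  qed
qed

lemma length_kW: "length (kW V n) = n"
  by (induction n) auto

lemma inf_kW: "infinite V \<Longrightarrow> infinite (ext V (kW V n))"
proof (induction n)
  case 0
  have "ext V [] = V" unfolding ext_def by simp
  then show ?case using 0 by simp
next
  case (Suc n)
  show ?case
  proof (cases "infinite (ext V (kW V n @ [False]))")
    case True then show ?thesis by simp
  next
    case False
    have "infinite ({kW V n} \<union> ext V (kW V n @ [False]) \<union> ext V (kW V n @ [True]))"
      using Suc finite_subset[OF ext_split] by blast
    then have "infinite (ext V (kW V n @ [True]))" using False by simp
    then show ?thesis using False by simp
  qed
qed

lemma kW_Suc: "kW V (Suc n) = kW V n @ [kW V (Suc n) ! n]"
  using length_kW[of V n] by (auto simp: nth_append)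

lemma map_kW: "map (\<lambda>i. kW V (Suc i) ! i) [0..<n] = kW V n"
proof (induction n)
  case 0 then show ?case by simp
next
  case (Suc n)
  then show ?case using kW_Suc[of V n] by simp
qed

lemma konig:
  assumes "infinite (V :: bool list set)"
  shows "\<exists>z. \<forall>n. infinite {u \<in> V. take n u = map z [0..<n]}"
proof -
  have "infinite {u \<in> V. take n u = map (\<lambda>i. kW V (Suc i) ! i) [0..<n]}" for n
    using inf_kW[OF assms, of n] unfolding map_kW ext_def length_kW .
  then show ?thesis by blast
qed

lemma tau_take:
  assumes "u \<in> tau X v" "length v \<le> j" "j \<le> length u"
  shows "take j u \<in> tau X v"
proof -
  have a: "take (length v) u = v" "\<forall>i. length v \<le> i \<and> i \<le> length u \<longrightarrow> X (take i u)"
    using assms(1) unfolding tau_def by auto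
  have l: "length (take j u) = j" using assms(3) by simp
  have "take (length v) (take j u) = v" using a(1) assms(2) by (simp add: min_absorb1)
  moreover have "\<forall>i. length v \<le> i \<and> i \<le> length (take j u) \<longrightarrow> X (take i (take j u))"
    using a(2) assms(3) l by (simp add: min_absorb1)
  ultimately show ?thesis unfolding tau_def using l assms(2,3) by auto
qed

lemma tau_X: "u \<in> tau X v \<Longrightarrow> X u"
proof -
  assume "u \<in> tau X v"
  then have "X (take (length u) u)" unfolding tau_def by auto
  then show "X u" by simp
qed

lemma Ltilde_sub: "Ltilde_alpha X h \<alpha> \<subseteq> L_alpha X h \<alpha>"
proof
  fix x assume "x \<in> Ltilde_alpha X h \<alpha>"
  moreover have "Stilde X \<subseteq> Sset X" unfolding Stilde_def Sset_def by auto
  ultimately show "x \<in> L_alpha X h \<alpha>"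
    unfolding Ltilde_alpha_def L_alpha_def Lset_def
    by (auto elim!: infinite_super[rotated])
qed

lemma Theta_sub:
  assumes "0 < h" "h < \<alpha>"
  shows "Theta X \<subseteq> L_alpha X h \<alpha>"
proof
  fix x assume "x \<in> Theta X"
  then obtain u z where xz: "x = phi (xdot z)" and z: "z \<in> boundary_tau X u"
    unfolding Theta_def by auto
  define c where "c = h / \<alpha>"
  have c: "0 < c" "c < 1" unfolding c_def using assms by auto
  define W where "W = (\<lambda>j. map z [0..<j]) ` {Suc (length u)..}"
  have "inj_on (\<lambda>j. map z [0..<j]) {Suc (length u)..}"
    by (rule inj_onI) (metis diff_zero length_map length_upt)
  hence infW: "infinite W" unfolding W_def using infinite_Ici finite_imageD by blast
  have "W \<subseteq> {w \<in> Sset X. tdist x (xw w) < 2 powr (- (h * real (length w) / \<alpha>))}"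
  proof
    fix w assume "w \<in> W"
    then obtain j where j: "Suc (length u) \<le> j" and w: "w = map z [0..<j]" unfolding W_def by auto
    have "w \<in> tau X u" using z j w unfolding boundary_tau_def by auto
    hence "X w" by (rule tau_X)
    have "tdist x (xw w) = tdist (xdot z) (wv w)" unfolding xz xw_wv tdist_phi1 tdist_phi2 ..
    also have "\<dots> \<le> \<bar>xdot z - wv w\<bar>" by (rule tdist_le_abs)
    also have "\<dots> \<le> (1/2)^j" using xdot_bounds[of z j] w by simp
    also have "\<dots> < 2 powr (-(c * real j))" using R2c[OF c(2)] j by simp
    also have "\<dots> = 2 powr (- (h * real (length w) / \<alpha>))" using w c_def by simp
    finally show "w \<in> {w \<in> Sset X. tdist x (xw w) < 2 powr (- (h * real (length w) / \<alpha>))}"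
      using \<open>X w\<close> unfolding Sset_def by simp
  qed
  then have "infinite {w \<in> Sset X. tdist x (xw w) < 2 powr (- (h * real (length w) / \<alpha>))}"
    using infW finite_subset by blast
  then show "x \<in> L_alpha X h \<alpha>" unfolding L_alpha_def Lset_def using xz phi_torus by simp
qed

lemma L_sub:
  assumes "0 < h" "h < \<alpha>" and xL: "x \<in> L_alpha X h \<alpha>" and xn: "x \<notin> Ltilde_alpha X h \<alpha>"
  shows "x \<in> Theta X"
proof -
  define c where "c = h / \<alpha>"
  have c: "0 < c" "c < 1" unfolding c_def using assms by auto
  define r where "r n = 2 powr (-(c * real n))" for n :: nat
  have rdef: "2 powr (- (h * real n / \<alpha>)) = r n" for n unfolding r_def c_def by simp
  have rmono: "m \<le> n \<Longrightarrow> r n \<le> r m" for m n unfolding r_def using R1c[of c m n] c by simp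
  define U where "U = {u \<in> Sset X. tdist x (xw u) < r (length u)}"
  have xT: "x \<in> torus" and infU: "infinite U"
    using xL unfolding L_alpha_def Lset_def U_def rdef by auto
  define P where "P u k \<longleftrightarrow> k \<le> length u \<and> (\<forall>j. k \<le> j \<and> j \<le> length u \<longrightarrow> X (take j u))" for u k
  define m where "m u = (LEAST k. P u k)" for u
  define rt where "rt u = take (m u) u" for u
  have m1: "P u (m u)" if "u \<in> U" for u
  proof -
    have "X u" using that unfolding U_def Sset_def by simp
    hence "P u (length u)" unfolding P_def by auto
    thus ?thesis unfolding m_def by (rule LeastI)
  qed
  have m2: "\<not> X (take (m u - 1) u)" if "u \<in> U" "m u > 0" for u
  proof
    assume a: "X (take (m u - 1) u)"
    have "P u (m u - 1)" using m1[OF that(1)] a unfolding P_def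
      by (metis Suc_diff_1 Suc_leI diff_le_self le_antisym not_less_eq_eq order_trans that(2))
    hence "m u \<le> m u - 1" unfolding m_def by (rule Least_le)
    thus False using that(2) by simp
  qed
  have len_rt: "length (rt u) = m u" if "u \<in> U" for u
    using m1[OF that] unfolding P_def rt_def by simp
  have tau_rt: "u \<in> tau X (rt u)" if "u \<in> U" for u
    using m1[OF that] len_rt[OF that] unfolding P_def tau_def rt_def by auto
  have Stil: "rt u \<in> Stilde X" if "u \<in> U" "m u > 0" for u
  proof -
    have "X (rt u)" using m1[OF that(1)] unfolding P_def rt_def by simp
    moreover have "parent (rt u) = take (m u - 1) u"
      unfolding parent_def rt_def using m1[OF that(1)] unfolding P_def by (simp add: butlast_take)
    moreover have "rt u \<noteq> []" using len_rt[OF that(1)] that(2) by auto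
    ultimately show ?thesis using m2[OF that] unfolding Stilde_def by simp
  qed
  obtain N where N: "N \<ge> 1" "\<forall>n\<ge>N. r (n+1) + (1/2::real)^n \<le> r n"
    using R3c[OF c] unfolding r_def by blast
  have close: "tdist x (xw (rt u)) < r (length (rt u))" if "u \<in> U" "N \<le> m u" for u
  proof (cases "m u = length u")
    case True
    then have "rt u = u" unfolding rt_def by simp
    then show ?thesis using that(1) unfolding U_def by simp
  next
    case False
    have mu: "m u \<le> length u" using m1[OF that(1)] unfolding P_def by simp
    with False have mu1: "m u + 1 \<le> length u" by simp
    have "tdist x (xw (rt u)) = tdist x (wv (rt u))" unfolding xw_wv tdist_phi2 ..
    also have "\<dots> \<le> tdist x (wv u) + tdist (wv u) (wv (rt u))" by (rule tdist_triangle)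
    also have "\<dots> \<le> tdist x (wv u) + \<bar>wv u - wv (rt u)\<bar>" using tdist_le_abs by (intro add_left_mono)
    also have "\<dots> \<le> tdist x (wv u) + (1/2)^(m u)"
      using wv_take[OF mu] unfolding rt_def by simp
    also have "\<dots> < r (length u) + (1/2)^(m u)"
      using that(1) unfolding U_def xw_wv tdist_phi2 by simp
    also have "\<dots> \<le> r (m u + 1) + (1/2)^(m u)" using rmono[OF mu1] by simp
    also have "\<dots> \<le> r (m u)" using N(2) that(2) by simp
    finally show ?thesis using len_rt[OF that(1)] by simp
  qed
  show ?thesis
  proof (cases "finite (rt ` U)")
    case False
    define R' where "R' = {v \<in> rt ` U. N \<le> length v}"
    have "rt ` U \<subseteq> R' \<union> {xs. set xs \<subseteq> UNIV \<and> length xs \<le> N}" unfolding R'_def by auto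
    moreover have "finite {xs :: bool list. set xs \<subseteq> UNIV \<and> length xs \<le> N}"
      by (rule finite_lists_length_le) simp
    ultimately have "infinite R'" using False finite_subset by blast
    moreover have "R' \<subseteq> {v \<in> Stilde X. tdist x (xw v) < r (length v)}"
    proof
      fix v assume "v \<in> R'"
      then obtain u where u: "u \<in> U" "v = rt u" "N \<le> m u" unfolding R'_def using len_rt by auto
      then show "v \<in> {v \<in> Stilde X. tdist x (xw v) < r (length v)}"
        using Stil[of u] close[of u] N(1) by auto
    qed
    ultimately have "infinite {v \<in> Stilde X. tdist x (xw v) < r (length v)}"
      using finite_subset by blast
    then have "x \<in> Ltilde_alpha X h \<alpha>" unfolding Ltilde_alpha_def Lset_def rdef using xT by simp
    with xn show ?thesis by simp
  next
    case True
    have "U \<subseteq> (\<Union>v\<in>rt ` U. {u \<in> U. rt u = v})" by auto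
    then obtain v where v: "v \<in> rt ` U" and infV: "infinite {u \<in> U. rt u = v}"
      using infU True finite_subset by (metis (no_types, lifting) finite_UN)
    define V where "V = {u \<in> U. rt u = v}"
    have Vtau: "u \<in> tau X v" if "u \<in> V" for u using tau_rt that unfolding V_def by auto
    obtain z where z: "\<And>n. infinite {u \<in> V. take n u = map z [0..<n]}"
      using konig[of V] infV unfolding V_def by blast
    have getu: "\<exists>u. u \<in> V \<and> take n u = map z [0..<n] \<and> n \<le> length u" for n
    proof -
      obtain u where "u \<in> {u \<in> V. take n u = map z [0..<n]}"
        using infinite_imp_nonempty[OF z[of n]] by blast
      moreover then have "n \<le> length u"
        by (metis (mono_tags, lifting) diff_zero length_map length_take length_upt mem_Collect_eq min.cobounded1 min_def)
      ultimately show ?thesis by blast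
    qed
    have zb: "z \<in> boundary_tau X v"
      unfolding boundary_tau_def mem_Collect_eq
    proof (intro allI impI)
      fix j assume j: "length v \<le> j"
      obtain u where u: "u \<in> V" "take j u = map z [0..<j]" "j \<le> length u" using getu by blast
      show "map z [0..<j] \<in> tau X v" using tau_take[OF Vtau[OF u(1)] j u(3)] u(2) by simp
    qed
    have bnd: "tdist x (xdot z) \<le> r n + 2 * (1/2)^n" for n
    proof -
      obtain u where u: "u \<in> V" "take n u = map z [0..<n]" "n \<le> length u" using getu by blast
      have "tdist x (xdot z) \<le> tdist x (wv u) + tdist (wv u) (xdot z)" by (rule tdist_triangle)
      also have "\<dots> \<le> tdist x (wv u) + \<bar>wv u - xdot z\<bar>" using tdist_le_abs by (intro add_left_mono)
      also have "\<bar>wv u - xdot z\<bar> \<le> 2 * (1/2)^n"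
        using wv_take[OF u(3)] xdot_bounds[of z n] u(2) by simp
      also have "tdist x (wv u) < r (length u)" using u(1) unfolding V_def U_def xw_wv tdist_phi2 by simp
      also have "r (length u) \<le> r n" using rmono[OF u(3)] .
      finally show ?thesis by simp
    qed
    have lim: "(\<lambda>n. r n + 2 * (1/2::real)^n) \<longlonglongrightarrow> 0 + 2 * 0"
      unfolding r_def by (intro tendsto_intros R4c[OF c(1)]) simp
    have "tdist x (xdot z) \<le> 0"
      using LIMSEQ_le_const[OF lim] bnd by simp
    hence "x = phi (xdot z)" using tdist_zero_eq[OF xT phi_torus] unfolding tdist_phi2 by simp
    then show ?thesis unfolding Theta_def using zb by blast
  qed
qed

theorem mainTheorem8:
  fixes X :: "bool list \<Rightarrow> bool" and h \<alpha> :: real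
  assumes "h > 0" and "\<alpha> > h"
  shows "L_alpha X h \<alpha> = Ltilde_alpha X h \<alpha> \<union> Theta X"
  using L_sub[OF assms] Ltilde_sub[of X h \<alpha>] Theta_sub[OF assms, of X] by blast

end
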